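(* Let $F$ be a nonarchimedean local field with ring of integers $\mathcal{O}$, uniformizer $\varpi$, residue field of order $q$. Let $\nu\in\mathbb{C}$ and let $V_\nu$ be the space of locally constant $f:\mathrm{SL}_2(F)\to\mathbb{C}$ with $f(a(t)nk)=|t|^{\nu+1}f(k)$ for $t\in F^\times$, $n\in N$, $k\in\mathrm{SL}_2(\mathcal{O})$, where $a(t)=\mathrm{diag}(t,t^{-1})$ and $N$ is the group of upper triangular unipotent matrices; $\mathrm{SL}_2(F)$ acts by right translation ($\pi_\nu$). Let $f_0\in V_\nu$ be the vector with $f_0(a(t)nk)=|t|^{\nu+1}$. Let $\tilde\eta$ be a character of $F$ trivial on $\mathcal{O}$ and nontrivial on $\varpi^{-1}\mathcal{O}$, $\eta\begin{pmatrix}1&x\\0&1\end{pmatrix}=\tilde\eta(x)$, $w=\begin{pmatrix}0&1\\-1&0\end{pmatrix}$, and $\psi(f)=\int_N\eta(n^{-1})f(wn)\,dn$, with $W(g)=\psi(\pi_\nu(g)f_0)$. Put $I(s)=\int_{F^\times}W(a(t))|t|^{s-1}d^\times t$. Then for $\mathrm{Re}(s)$ sufficiently large $$I(s)=\frac{L(\pi,\mathrm{Ad},s)}{L(\pi,\mathrm{triv},s)}F_\nu(s),$$ where $L(\pi,\mathrm{triv},s)=\frac{1}{1-q^{-s}}$, $L(\pi,\mathrm{Ad},s)=\frac{1}{(1-q^{-(s+\nu)})(1-q^{-s})(1-q^{-(s-\nu)})}$, and $F_\nu(s)=(1-q^{-\nu-1})(1+q^{-s})$ is entire; that is, $I(s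)=\frac{(1-q^{-\nu-1})(1+q^{-s})}{(1-q^{-(s+\nu)})(1-q^{-(s-\nu)})}$.
   Context: Haar measures: $dx$ on $F$ (and $dn$ on $N\cong F$) normalized so that $\mathcal{O}$ has volume $1$; $d^\times t$ on $F^\times$ normalized so that $\mathcal{O}^\times$ has volume $1$. The integral defining $\psi$ is understood as $\lim_{k\to\infty}\int_{\varpi^{-k}\mathcal{O}}$ over $x$ for $n=\begin{pmatrix}1&x\\0&1\end{pmatrix}$ (it is absolutely convergent for $\mathrm{Re}(\nu)>0$). *)

theory Defs
  imports "HOL-Analysis.Analysis"
begin

definition int_ring :: "('a::field \<Rightarrow> real) \<Rightarrow> 'a set" where
  "int_ring av = {x. av x \<le> 1}"

definition unit_group :: "('a::field \<Rightarrow> real) \<Rightarrow> 'a set" where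
  "unit_group av = {x. av x = 1}"

definition residue_field :: "('a::field \<Rightarrow> real) \<Rightarrow> 'a set set" where
  "residue_field av = int_ring av //
     {(x, y). x \<in> int_ring av \<and> y \<in> int_ring av \<and> av (x - y) < 1}"

definition av_cauchy :: "('a::field \<Rightarrow> real) \<Rightarrow> (nat \<Rightarrow> 'a) \<Rightarrow> bool" where
  "av_cauchy av X \<longleftrightarrow> (\<forall>e>0. \<exists>N. \<forall>m\<ge>N. \<forall>n\<ge>N. av (X m - X n) < e)"

definition av_conv :: "('a::field \<Rightarrow> real) \<Rightarrow> (nat \<Rightarrow> 'a) \<Rightarrow> 'a \<Rightarrow> bool" where
  "av_conv av X L \<longleftrightarrow> (\<forall>e>0. \<exists>N. \<forall>n\<ge>N. av (X n - L) < e)"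

definition nonarch_local_field :: "('a::field \<Rightarrow> real) \<Rightarrow> 'a \<Rightarrow> nat \<Rightarrow> bool" where
  "nonarch_local_field av \<pi> q \<longleftrightarrow>
     (\<forall>x. 0 \<le> av x) \<and> (\<forall>x. av x = 0 \<longleftrightarrow> x = 0) \<and>
     (\<forall>x y. av (x * y) = av x * av y) \<and>
     (\<forall>x y. av (x + y) \<le> max (av x) (av y)) \<and>
     (\<forall>x. x \<noteq> 0 \<longrightarrow> (\<exists>k::int. av x = real q powr real_of_int k)) \<and>
     av \<pi> = 1 / real q \<and>
     finite (residue_field av) \<and> card (residue_field av) = q \<and>
     (\<forall>X. av_cauchy av X \<longrightarrow> (\<exists>L. av_conv av X L))"

definition av_balls :: "('a::field \<Rightarrow> real) \<Rightarrow> 'a set set" where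
  "av_balls av = {{y. av (y - x) \<le> r} | x r. True}"

definition add_haar :: "('a::field \<Rightarrow> real) \<Rightarrow> 'a measure \<Rightarrow> bool" where
  "add_haar av mu \<longleftrightarrow>
     space mu = UNIV \<and> sets mu = sigma_sets UNIV (av_balls av) \<and>
     (\<forall>A\<in>sets mu. \<forall>x. emeasure mu ((\<lambda>y. x + y) ` A) = emeasure mu A) \<and>
     emeasure mu (int_ring av) = 1"

definition mult_haar :: "('a::field \<Rightarrow> real) \<Rightarrow> 'a measure \<Rightarrow> 'a measure \<Rightarrow> bool" where
  "mult_haar av mu mux \<longleftrightarrow>
     space mux = {x. x \<noteq> 0} \<and> sets mux = sets (restrict_space mu {x. x \<noteq> 0}) \<and>
     (\<forall>A\<in>sets mux. \<forall>x. x \<noteq> 0 \<longrightarrow> emeasure mux ((\<lambda>y. x * y) ` A) = emeasure mux A) \<and>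
     emeasure mux (unit_group av) = 1"

definition mat2 :: "'a::zero \<Rightarrow> 'a \<Rightarrow> 'a \<Rightarrow> 'a \<Rightarrow> 'a^2^2" where
  "mat2 a b c d = vector [vector [a, b], vector [c, d]]"

definition amat :: "'a::field \<Rightarrow> 'a^2^2" where "amat t = mat2 t 0 0 (inverse t)"
definition nmat :: "'a::field \<Rightarrow> 'a^2^2" where "nmat x = mat2 1 x 0 1"
definition wmat :: "'a::field^2^2" where "wmat = mat2 0 1 (-1) 0"

definition SL2 :: "('a::field^2^2) set" where "SL2 = {g. det g = 1}"

definition SL2_int :: "('a::field \<Rightarrow> real) \<Rightarrow> ('a^2^2) set" where
  "SL2_int av = {k. det k = 1 \<and> (\<forall>i j. k $ i $ j \<in> int_ring av)}"

text \<open>\<psi>(f) = lim_k \<integral>_{\<pi>^{-k} O} \<eta>(n(x)^{-1}) f(w n(x)) dx, and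
  W(g) = \<psi>(\<pi>_\<nu>(g) f0), where (\<pi>_\<nu>(g) f0)(h) = f0(h g).\<close>
definition whittaker_psi ::
  "('a::field \<Rightarrow> real) \<Rightarrow> 'a \<Rightarrow> 'a measure \<Rightarrow> ('a \<Rightarrow> complex) \<Rightarrow> ('a^2^2 \<Rightarrow> complex) \<Rightarrow> complex" where
  "whittaker_psi av \<pi> mu eta f =
     lim (\<lambda>k::nat. LINT x:((\<lambda>y. inverse \<pi> ^ k * y) ` int_ring av)|mu. eta (- x) * f (wmat ** nmat x))"

definition whittaker_W ::
  "('a::field \<Rightarrow> real) \<Rightarrow> 'a \<Rightarrow> 'a measure \<Rightarrow> ('a \<Rightarrow> complex) \<Rightarrow> ('a^2^2 \<Rightarrow> complex) \<Rightarrow> 'a^2^2 \<Rightarrow> complex" where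
  "whittaker_W av \<pi> mu eta f0 g = whittaker_psi av \<pi> mu eta (\<lambda>h. f0 (h ** g))"

definition zeta_I ::
  "('a::field \<Rightarrow> real) \<Rightarrow> 'a \<Rightarrow> 'a measure \<Rightarrow> 'a measure \<Rightarrow> ('a \<Rightarrow> complex) \<Rightarrow> ('a^2^2 \<Rightarrow> complex) \<Rightarrow> complex \<Rightarrow> complex" where
  "zeta_I av \<pi> mu mux eta f0 s =
     (LINT t|mux. whittaker_W av \<pi> mu eta f0 (amat t) * complex_of_real (av t) powr (s - 1))"

definition L_triv :: "nat \<Rightarrow> complex \<Rightarrow> complex" where
  "L_triv q s = 1 / (1 - of_nat q powr (- s))"

definition L_Ad :: "nat \<Rightarrow> complex \<Rightarrow> complex \<Rightarrow> complex" where
  "L_Ad q \<nu> s = 1 / ((1 - of_nat q powr (-(s + \<nu>))) * (1 - of_nat q powr (- s))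
                     * (1 - of_nat q powr (-(s - \<nu>))))"

definition F_nu :: "nat \<Rightarrow> complex \<Rightarrow> complex \<Rightarrow> complex" where
  "F_nu q \<nu> s = (1 - of_nat q powr (- \<nu> - 1)) * (1 + of_nat q powr (- s))"

end

theory Submission
  imports Defs
begin

locale lf =
  fixes av :: "'a::field \<Rightarrow> real" and \<pi> :: 'a and q :: nat
  assumes F: "nonarch_local_field av \<pi> q"
begin

abbreviation "Q \<equiv> real q"

lemmas Fd = F[unfolded nonarch_local_field_def]
lemma av_nonneg: "0 \<le> av x" using Fd[THEN conjunct1] by simp
lemma av_zero_iff[simp]: "av x = 0 \<longleftrightarrow> x = 0" using Fd[THEN conjunct2, THEN conjunct1] by simp
lemma av_mult: "av (x * y) = av x * av y" using Fd[THEN conjunct2, THEN conjunct2, THEN conjunct1] by simp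
lemma av_ultra: "av (x + y) \<le> max (av x) (av y)" using Fd[THEN conjunct2, THEN conjunct2, THEN conjunct2, THEN conjunct1] by simp
lemma av_disc: "x \<noteq> 0 \<Longrightarrow> \<exists>k::int. av x = Q powr real_of_int k"
  using Fd[THEN conjunct2, THEN conjunct2, THEN conjunct2, THEN conjunct2, THEN conjunct1] by simp
lemma av_pi: "av \<pi> = 1 / Q" using Fd[THEN conjunct2, THEN conjunct2, THEN conjunct2, THEN conjunct2, THEN conjunct2, THEN conjunct1] by simp
lemma res_fin: "finite (residue_field av)" "card (residue_field av) = q"
  using Fd[THEN conjunct2, THEN conjunct2, THEN conjunct2, THEN conjunct2, THEN conjunct2, THEN conjunct2] by simp_all

lemma av_pos: "x \<noteq> 0 \<Longrightarrow> 0 < av x" using av_nonneg[of x] av_zero_iff[of x] by linarith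
lemma av_0[simp]: "av 0 = 0" by simp
lemma av_1[simp]: "av 1 = 1"
proof -
  have "av 1 = av 1 * av 1" using av_mult[of 1 1] by simp
  moreover have "av 1 \<noteq> 0" by simp
  ultimately show ?thesis by (metis mult_cancel_left1)
qed
lemma av_minus[simp]: "av (- x) = av x"
proof -
  have "av (-1) * av (-1) = 1" using av_mult[of "-1" "-1"] by simp
  hence "(av (-1) - 1) * (av (-1) + 1) = 0" by (simp add: algebra_simps)
  moreover have "av (-1) + 1 \<noteq> 0" using av_nonneg[of "-1"] by linarith
  ultimately have "av (-1) = 1" by simp
  thus ?thesis using av_mult[of "-1" x] by simp
qed
lemma av_sym: "av (x - y) = av (y - x)" by (metis av_minus minus_diff_eq)
lemma av_inverse: "av (inverse x) = inverse (av x)"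
proof (cases "x = 0")
  case False
  have "av (inverse x) * av x = 1" using av_mult[of "inverse x" x] False by simp
  moreover have "av x \<noteq> 0" using False by simp
  ultimately show ?thesis by (simp add: inverse_eq_divide eq_divide_eq)
qed simp
lemma av_divide: "av (x / y) = av x / av y"
  by (simp add: divide_inverse av_mult av_inverse)
lemma av_power: "av (x ^ n) = av x ^ n" by (induct n) (auto simp: av_mult)
lemma av_diff: "av (x - y) \<le> max (av x) (av y)"
  using av_ultra[of x "-y"] by simp

lemma q_ge2: "q \<ge> 2"
proof (rule ccontr)
  assume "\<not> q \<ge> 2"
  hence "q = 0 \<or> q = 1" by auto
  thus False
  proof
    assume "q = 0"
    hence "av 1 = 0" using av_disc[of 1] by auto
    thus False by simp
  next
    assume q1: "q = 1"
    hence one: "x \<noteq> 0 \<Longrightarrow> av x = 1" for x using av_disc[of x] by auto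
    define r where "r = {(x, y). x \<in> int_ring av \<and> y \<in> int_ring av \<and> av (x - y) < 1}"
    have le1: "av x \<le> 1" for x using one[of x] by (cases "x = 0") auto
    hence O: "int_ring av = UNIV" by (auto simp: int_ring_def)
    have ee: "av (x - y) < 1 \<Longrightarrow> y = x" for x y using one[of "x - y"] by (cases "x = y") auto
    have rc: "r `` {x} = {x}" for x
      using ee[of x] by (auto simp: r_def O)
    have "{0} \<in> residue_field av" "{1} \<in> residue_field av"
      unfolding residue_field_def r_def[symmetric] using rc O by (metis UNIV_I quotientI)+
    hence "card {{0::'a}, {1}} \<le> card (residue_field av)"
      using res_fin by (intro card_mono) auto
    thus False using res_fin q1 by simp
  qed
qed

lemma Q_gt1: "Q > 1" using q_ge2 by simp
lemma Q_pos: "Q > 0" using q_ge2 by simp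
lemma q_nz[simp]: "q \<noteq> 0" using q_ge2 by simp

lemma powQ_pos: "Q powr r > 0" using Q_pos by simp
lemma powQ_le: "Q powr a \<le> Q powr b \<longleftrightarrow> a \<le> b" using Q_gt1 by simp
lemma powQ_less: "Q powr a < Q powr b \<longleftrightarrow> a < b" using Q_gt1 by simp
lemma powQ_eq: "Q powr a = Q powr b \<longleftrightarrow> a = b" using Q_gt1 by (metis powr_inj less_numeral_extra(4) Q_pos)

lemma disc_lt: assumes "av x < Q powr real_of_int j" shows "av x \<le> Q powr real_of_int (j - 1)"
proof (cases "x = 0")
  case True thus ?thesis using powQ_pos by simp
next
  case False
  then obtain k :: int where k: "av x = Q powr k" using av_disc by blast
  hence "k < j" using assms powQ_less by simp
  hence "k \<le> j - 1" by simp
  thus ?thesis using k powQ_le by simp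
qed

lemma pi_nz: "\<pi> \<noteq> 0" using av_pi Q_pos by (metis av_0 divide_eq_0_iff less_numeral_extra(3) one_neq_zero)

lemma exists_av: "\<exists>c. c \<noteq> 0 \<and> av c = Q powr real_of_int j"
proof (cases "j \<ge> 0")
  case True
  have "av (inverse \<pi> ^ nat j) = Q ^ nat j" by (simp add: av_power av_inverse av_pi)
  also have "\<dots> = Q powr real_of_int j" using True Q_pos by (simp add: powr_realpow[symmetric])
  finally show ?thesis using pi_nz by (intro exI[of _ "inverse \<pi> ^ nat j"]) auto
next
  case False
  have "av (\<pi> ^ nat (-j)) = (1/Q) ^ nat (-j)" by (simp add: av_power av_pi)
  also have "\<dots> = Q powr (- real (nat (-j)))"
    using Q_pos by (simp add: powr_minus powr_realpow power_one_over inverse_eq_divide)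
  also have "- real (nat (-j)) = real_of_int j" using False by simp
  finally show ?thesis using pi_nz by (intro exI[of _ "\<pi> ^ nat (-j)"]) auto
qed

end

context lf begin

definition B :: "int \<Rightarrow> 'a set" where "B j = {x. av x \<le> Q powr real_of_int j}"

lemma B0: "B 0 = int_ring av" using Q_pos by (simp add: B_def int_ring_def)

lemma B_mono: "i \<le> j \<Longrightarrow> B i \<subseteq> B j"
  unfolding B_def using powQ_le by (auto intro: order_trans)

lemma in_B_nat: "\<exists>k::nat. x \<in> B (int k)"
proof (cases "x = 0")
  case True thus ?thesis by (auto simp: B_def intro: less_imp_le[OF powQ_pos])
next
  case False
  then obtain m :: int where m: "av x = Q powr m" using av_disc by blast
  have "Q powr m \<le> Q powr real_of_int (int (nat m))" using powQ_le by simp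
  hence "x \<in> B (int (nat m))" using m by (simp add: B_def)
  thus ?thesis by blast
qed

lemma shell_av: assumes "x \<in> B (j + 1)" "x \<notin> B j" shows "av x = Q powr (j + 1)"
proof -
  have x0: "x \<noteq> 0" using assms(2) powQ_pos by (auto simp: B_def intro: less_imp_le)
  then obtain m :: int where m: "av x = Q powr m" using av_disc by blast
  have "m \<le> j + 1" "\<not> m \<le> j" using assms m powQ_le by (auto simp: B_def)
  hence "m = j + 1" by simp
  thus ?thesis using m by simp
qed

definition rel :: "('a \<times> 'a) set" where
  "rel = {(x, y). x \<in> int_ring av \<and> y \<in> int_ring av \<and> av (x - y) < 1}"

lemma rel_equiv: "equiv (int_ring av) rel"
proof (rule equivI)
  show "refl_on (int_ring av) rel" by (auto simp: refl_on_def rel_def)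
  show "rel \<subseteq> int_ring av \<times> int_ring av" by (auto simp: rel_def)
  show "sym rel" by (auto simp: sym_def rel_def av_sym)
  show "trans rel"
  proof (rule transI)
    fix x y z assume "(x, y) \<in> rel" "(y, z) \<in> rel"
    moreover have "av (x - z) \<le> max (av (x - y)) (av (y - z))"
      using av_ultra[of "x - y" "y - z"] by simp
    ultimately show "(x, z) \<in> rel" by (auto simp: rel_def)
  qed
qed

lemma reps: "\<exists>R. finite R \<and> card R = q \<and> R \<subseteq> int_ring av \<and>
   (\<forall>r\<in>R. \<forall>r'\<in>R. r \<noteq> r' \<longrightarrow> \<not> av (r - r') < 1) \<and>
   (\<forall>x\<in>int_ring av. \<exists>r\<in>R. av (x - r) < 1)"
proof -
  have RF: "residue_field av = int_ring av // rel" by (simp add: residue_field_def rel_def)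
  define rep where "rep C = (SOME x. x \<in> C)" for C :: "'a set"
  have rep_in: "rep C \<in> C" if "C \<in> residue_field av" for C
  proof -
    from that obtain x where "x \<in> int_ring av" "C = rel `` {x}" by (auto simp: RF quotient_def)
    hence "x \<in> C" by (auto simp: rel_def)
    thus ?thesis unfolding rep_def by (rule someI)
  qed
  have inj: "inj_on rep (residue_field av)"
  proof (rule inj_onI)
    fix C D assume C: "C \<in> residue_field av" and D: "D \<in> residue_field av" and e: "rep C = rep D"
    hence "rep C \<in> C \<inter> D" using rep_in[OF C] rep_in[OF D] by simp
    thus "C = D" using quotient_disj[OF rel_equiv] C D RF by blast
  qed
  define R where "R = rep ` residue_field av"
  have csub: "C \<subseteq> int_ring av" if "C \<in> residue_field av" for C
    using that RF by (auto simp: quotient_def rel_def)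
  have "finite R" "card R = q" using res_fin inj by (auto simp: R_def card_image)
  moreover have "R \<subseteq> int_ring av"
    using rep_in csub by (auto simp: R_def)
  moreover have "\<forall>r\<in>R. \<forall>r'\<in>R. r \<noteq> r' \<longrightarrow> \<not> av (r - r') < 1"
  proof (intro ballI impI notI)
    fix r r' assume r: "r \<in> R" and r': "r' \<in> R" and ne: "r \<noteq> r'" and lt: "av (r - r') < 1"
    obtain C where C: "C \<in> residue_field av" "r = rep C" using r R_def by auto
    obtain D where D: "D \<in> residue_field av" "r' = rep D" using r' R_def by auto
    have "C \<noteq> D" using C D ne by auto
    hence dj: "C \<inter> D = {}" using quotient_disj[OF rel_equiv] C D RF by blast
    obtain x where x: "x \<in> int_ring av" "C = rel `` {x}" using C RF by (auto simp: quotient_def)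
    have "(x, r) \<in> rel" using rep_in[OF C(1)] C x by auto
    moreover have "r' \<in> int_ring av" using rep_in[OF D(1)] D csub by auto
    ultimately have "(r, r') \<in> rel" using lt by (auto simp: rel_def)
    hence "(x, r') \<in> rel" using \<open>(x, r) \<in> rel\<close> rel_equiv by (meson equivE transE)
    hence "r' \<in> C" using x by auto
    thus False using dj rep_in[OF D(1)] D by auto
  qed
  moreover have "\<forall>x\<in>int_ring av. \<exists>r\<in>R. av (x - r) < 1"
  proof
    fix x assume x: "x \<in> int_ring av"
    hence C: "rel `` {x} \<in> residue_field av" using RF by (simp add: quotientI)
    define r0 where "r0 = rep (rel `` {x})"
    have "r0 \<in> rel `` {x}" unfolding r0_def using C by (rule rep_in)
    hence "(x, r0) \<in> rel" by simp
    hence "av (x - r0) < 1" by (simp add: rel_def)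
    moreover have "r0 \<in> R" using C by (simp add: R_def r0_def)
    ultimately show "\<exists>r\<in>R. av (x - r) < 1" by (rule rev_bexI[rotated])
  qed
  ultimately show ?thesis by (intro exI[of _ R] conjI)
qed

lemma B_step: "\<exists>R c. finite R \<and> card R = q \<and> c \<noteq> 0 \<and> av c = Q powr real_of_int (j + 1) \<and>
   B (j + 1) = (\<Union>r\<in>R. {y. av (y - c * r) \<le> Q powr j}) \<and>
   (\<forall>r\<in>R. \<forall>r'\<in>R. r \<noteq> r' \<longrightarrow> {y. av (y - c * r) \<le> Q powr j} \<inter> {y. av (y - c * r') \<le> Q powr j} = {})"
proof -
  obtain R where R: "finite R" "card R = q" "R \<subseteq> int_ring av"
    "\<forall>r\<in>R. \<forall>r'\<in>R. r \<noteq> r' \<longrightarrow> \<not> av (r - r') < 1"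
    "\<forall>x\<in>int_ring av. \<exists>r\<in>R. av (x - r) < 1" using reps by blast
  obtain c where c: "c \<noteq> 0" "av c = Q powr (j + 1)" using exists_av by blast
  have cpos: "av c > 0" using c powQ_pos by simp
  have pj: "Q powr real_of_int (j + 1) * Q powr real_of_int (- 1) = Q powr j"
    by (subst powr_add[symmetric]) simp
  have "B (j + 1) = (\<Union>r\<in>R. {y. av (y - c * r) \<le> Q powr j})"
  proof (intro equalityI subsetI)
    fix y assume y: "y \<in> B (j + 1)"
    hence "av (y / c) \<le> 1" using c cpos by (simp add: B_def av_divide)
    then obtain r where r: "r \<in> R" "av (y / c - r) < 1" using R(5) by (auto simp: int_ring_def)
    hence "av (y / c - r) \<le> Q powr real_of_int (0 - 1)" using disc_lt[of _ 0] by simp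
    hence "av c * av (y / c - r) \<le> av c * Q powr real_of_int (- 1)"
      using cpos by (intro mult_left_mono) auto
    moreover have "c * (y / c - r) = y - c * r" using c by (simp add: field_simps)
    ultimately have "av (y - c * r) \<le> Q powr j" using c pj by (metis av_mult)
    thus "y \<in> (\<Union>r\<in>R. {y. av (y - c * r) \<le> Q powr j})" using r by auto
  next
    fix y assume "y \<in> (\<Union>r\<in>R. {y. av (y - c * r) \<le> Q powr j})"
    then obtain r where r: "r \<in> R" "av (y - c * r) \<le> Q powr j" by auto
    have "av (c * r) \<le> Q powr (j + 1)" using R(3) r c cpos
      by (auto simp: av_mult int_ring_def intro: mult_left_le)
    moreover have "av y \<le> max (av (y - c * r)) (av (c * r))" using av_ultra[of "y - c * r" "c * r"] by simp
    moreover have "Q powr j \<le> Q powr (j + 1)" using powQ_le by simp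
    ultimately show "y \<in> B (j + 1)" using r by (auto simp: B_def)
  qed
  moreover have "\<forall>r\<in>R. \<forall>r'\<in>R. r \<noteq> r' \<longrightarrow> {y. av (y - c * r) \<le> Q powr j} \<inter> {y. av (y - c * r') \<le> Q powr j} = {}"
  proof (intro ballI impI equalityI subsetI)
    fix r r' y assume rr: "r \<in> R" "r' \<in> R" "r \<noteq> r'"
      and y: "y \<in> {y. av (y - c * r) \<le> Q powr j} \<inter> {y. av (y - c * r') \<le> Q powr j}"
    have "av (c * r' - c * r) \<le> max (av (y - c * r)) (av (c * r' - y))"
      using av_ultra[of "y - c * r" "c * r' - y"] by simp
    hence "av (c * (r' - r)) \<le> Q powr j" using y av_sym[of "c * r'" y] by (auto simp: algebra_simps)
    hence "av c * av (r' - r) \<le> av c * Q powr real_of_int (- 1)" using c pj by (simp add: av_mult)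
    hence "av (r' - r) \<le> Q powr real_of_int (- 1)" by (rule iffD1[OF mult_le_cancel_left_pos[OF cpos]])
    moreover have "Q powr real_of_int (- 1) < Q powr real_of_int 0" by (subst powQ_less) simp
    ultimately have "av (r' - r) < 1" by simp
    thus "y \<in> {}" using R(4) rr by auto
  qed simp
  ultimately show ?thesis using R(1,2) c by (intro exI[of _ R] exI[of _ c] conjI)
qed

end

locale lfm = lf +
  fixes mu :: "'a measure"
  assumes dx: "add_haar av mu"
begin

lemma space_mu[simp]: "space mu = UNIV" using dx by (simp add: add_haar_def)
lemma sets_mu: "sets mu = sigma_sets UNIV (av_balls av)" using dx by (simp add: add_haar_def)
lemma trans_inv: "A \<in> sets mu \<Longrightarrow> emeasure mu ((\<lambda>y. x + y) ` A) = emeasure mu A"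
  using dx by (simp add: add_haar_def)
lemma O_meas: "emeasure mu (int_ring av) = 1" using dx by (simp add: add_haar_def)

lemma ball_sets[measurable]: "{y. av (y - x) \<le> r} \<in> sets mu"
proof -
  have "{y. av (y - x) \<le> r} \<in> av_balls av" unfolding av_balls_def by blast
  thus ?thesis by (simp add: sets_mu sigma_sets.Basic)
qed

lemma B_sets[measurable]: "B j \<in> sets mu"
  using ball_sets[of 0 "Q powr j"] by (simp add: B_def)

lemma ball_trans: "{y. av (y - (x + z)) \<le> r} = (\<lambda>y. x + y) ` {y. av (y - z) \<le> r}"
proof -
  have "{y. av (y - (x + z)) \<le> r} = {y. av ((y - x) - z) \<le> r}" by (simp add: algebra_simps)
  also have "\<dots> = (\<lambda>y. x + y) ` {y. av (y - z) \<le> r}"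
    by (auto simp: image_iff intro!: exI[of _ "_ - x"])
  finally show ?thesis .
qed

lemma ball_meas: "emeasure mu {y. av (y - x) \<le> r} = emeasure mu {y. av y \<le> r}"
  using ball_trans[of x 0 r] trans_inv[OF ball_sets[of 0 r]] by simp

lemma B_meas: "emeasure mu (B j) = ennreal (Q powr j)"
proof (induction j rule: int_induct[where k = 0])
  case base thus ?case using O_meas B0 by simp
next
  case (step1 i)
  obtain R c where R: "finite R" "card R = q" "c \<noteq> 0" "av c = Q powr real_of_int (i + 1)"
    "B (i + 1) = (\<Union>r\<in>R. {y. av (y - c * r) \<le> Q powr i})"
    "\<forall>r\<in>R. \<forall>r'\<in>R. r \<noteq> r' \<longrightarrow> {y. av (y - c * r) \<le> Q powr i} \<inter> {y. av (y - c * r') \<le> Q powr i} = {}"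
    using B_step[of i] by blast
  have "emeasure mu (B (i + 1)) = (\<Sum>r\<in>R. emeasure mu {y. av (y - c * r) \<le> Q powr i})"
    using R by (subst sum_emeasure) (auto simp: disjoint_family_on_def)
  also have "\<dots> = (\<Sum>r\<in>R. emeasure mu (B i))" by (simp add: ball_meas B_def)
  also have "\<dots> = ennreal (Q * Q powr i)" using R step1 by (simp add: ennreal_mult' ennreal_of_nat_eq_real_of_nat)
  also have "Q * Q powr i = Q powr (i + 1)" using Q_pos by (simp add: powr_add)
  finally show ?case .
next
  case (step2 i)
  obtain R c where R: "finite R" "card R = q" "c \<noteq> 0" "av c = Q powr real_of_int (i - 1 + 1)"
    "B (i - 1 + 1) = (\<Union>r\<in>R. {y. av (y - c * r) \<le> Q powr (i - 1)})"
    "\<forall>r\<in>R. \<forall>r'\<in>R. r \<noteq> r' \<longrightarrow> {y. av (y - c * r) \<le> Q powr (i - 1)} \<inter> {y. av (y - c * r') \<le> Q powr (i - 1)} = {}"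
    using B_step[of "i - 1"] by blast
  have "emeasure mu (B i) = (\<Sum>r\<in>R. emeasure mu {y. av (y - c * r) \<le> Q powr (i - 1)})"
    using R by (subst sum_emeasure) (auto simp: disjoint_family_on_def)
  also have "\<dots> = (\<Sum>r\<in>R. emeasure mu (B (i - 1)))" by (simp add: ball_meas B_def)
  also have "\<dots> = of_nat q * emeasure mu (B (i - 1))" using R by simp
  finally have e: "emeasure mu (B (i - 1)) = ennreal (Q powr i) / of_nat q"
    using step2 q_ge2 by (metis ennreal_mult_divide_eq mult.commute of_nat_eq_0_iff not_numeral_le_zero ennreal_of_nat_eq_real_of_nat ennreal_eq_0_iff ennreal_top_neq_of_nat mult_divide_eq_ennreal)
  also have "\<dots> = ennreal (Q powr i / Q)" using Q_pos
    by (simp add: divide_ennreal ennreal_of_nat_eq_real_of_nat)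
  also have "Q powr i / Q = Q powr (i - 1)" using Q_pos by (simp add: powr_diff)
  finally show ?case .
qed

end

locale lfe = lfm +
  fixes eta :: "'a \<Rightarrow> complex"
  assumes eta_hom: "\<forall>x y. eta (x + y) = eta x * eta y"
    and eta_O: "\<forall>x\<in>int_ring av. eta x = 1"
    and eta_nontriv: "\<exists>x\<in>(\<lambda>y. inverse \<pi> * y) ` int_ring av. eta x \<noteq> 1"
begin

lemma eta_add: "eta (x + y) = eta x * eta y" using eta_hom by blast
lemma eta_1: "av x \<le> 1 \<Longrightarrow> eta x = 1" using eta_O by (simp add: int_ring_def)
lemma eta_inv: "eta (- x) * eta x = 1"
  using eta_add[of "-x" x] eta_1[of 0] by simp

lemma eta_ball: assumes "av (y - r) \<le> 1" shows "eta (- y) = eta (- r)"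
proof -
  have "eta (- y) = eta (- r + (r - y))" by simp
  also have "\<dots> = eta (- r)" using eta_add[of "-r" "r - y"] eta_1[of "r - y"] assms av_sym[of r y] by simp
  finally show ?thesis .
qed

lemma cosets: "\<exists>R. finite R \<and> B (int k) = (\<Union>r\<in>R. {y. av (y - r) \<le> 1})"
proof (induction k)
  case 0
  have "B (int 0) = (\<Union>r\<in>{0}. {y. av (y - r) \<le> 1})" using Q_pos by (simp add: B_def)
  thus ?case by blast
next
  case (Suc k)
  then obtain R where R: "finite R" "B (int k) = (\<Union>r\<in>R. {y. av (y - r) \<le> 1})" by blast
  obtain S c where S: "finite S" "B (int k + 1) = (\<Union>s\<in>S. {y. av (y - c * s) \<le> Q powr (int k)})"
    using B_step[of "int k"] by blast
  define R' where "R' = (\<lambda>(s, r). c * s + r) ` (S \<times> R)"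
  have "finite R'" using R S by (simp add: R'_def)
  moreover have "B (int (Suc k)) = (\<Union>r\<in>R'. {y. av (y - r) \<le> 1})"
  proof -
    have e: "int (Suc k) = int k + 1" by simp
    have "B (int (Suc k)) = (\<Union>s\<in>S. {y. av (y - c * s) \<le> Q powr (int k)})" unfolding e by (rule S(2))
    also have "\<dots> = (\<Union>s\<in>S. {y. y - c * s \<in> B (int k)})" by (simp add: B_def)
    also have "\<dots> = (\<Union>s\<in>S. \<Union>r\<in>R. {y. av (y - (c * s + r)) \<le> 1})"
      using R(2) by (auto simp: algebra_simps)
    also have "\<dots> = (\<Union>r\<in>R'. {y. av (y - r) \<le> 1})" by (auto simp: R'_def)
    finally show ?thesis .
  qed
  ultimately show ?case by blast
qed

lemma cosets_fun: obtains Rf where "\<And>k. finite (Rf k)" "\<And>k. B (int k) = (\<Union>r\<in>Rf k. {y. av (y - r) \<le> 1})"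
proof -
  have "\<forall>k. \<exists>R. finite R \<and> B (int k) = (\<Union>r\<in>R. {y. av (y - r) \<le> 1})" using cosets by blast
  from choice[OF this] obtain Rf where "\<forall>k. finite (Rf k) \<and> B (int k) = (\<Union>r\<in>Rf k. {y. av (y - r) \<le> 1})" by blast
  thus ?thesis using that by blast
qed

lemma eta_meas[measurable]: "(\<lambda>x. eta (- x)) \<in> borel_measurable mu"
proof -
  obtain Rf where Rf: "\<And>k. finite (Rf k)" "\<And>k. B (int k) = (\<Union>r\<in>Rf k. {y. av (y - r) \<le> 1})"
    using cosets_fun by blast
  show ?thesis
  proof (rule measurableI)
    fix A :: "complex set"
    have "(\<lambda>x. eta (- x)) -` A \<inter> space mu = (\<Union>k. \<Union>r\<in>{r\<in>Rf k. eta (- r) \<in> A}. {y. av (y - r) \<le> 1})"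
    proof (intro equalityI subsetI)
      fix x assume x: "x \<in> (\<lambda>x. eta (- x)) -` A \<inter> space mu"
      obtain k where "x \<in> B (int k)" using in_B_nat by blast
      then obtain r where r: "r \<in> Rf k" "av (x - r) \<le> 1" using Rf(2)[of k] by auto
      hence "eta (- r) \<in> A" using x eta_ball[OF r(2)] by simp
      thus "x \<in> (\<Union>k. \<Union>r\<in>{r\<in>Rf k. eta (- r) \<in> A}. {y. av (y - r) \<le> 1})" using r by blast
    next
      fix x assume "x \<in> (\<Union>k. \<Union>r\<in>{r\<in>Rf k. eta (- r) \<in> A}. {y. av (y - r) \<le> 1})"
      then obtain k r where r: "r \<in> Rf k" "eta (- r) \<in> A" "av (x - r) \<le> 1" by blast
      thus "x \<in> (\<lambda>x. eta (- x)) -` A \<inter> space mu" using eta_ball[OF r(3)] by simp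
    qed
    also have "\<dots> \<in> sets mu"
      using Rf(1) by (intro sets.countable_UN sets.finite_UN) (auto intro: ball_sets)
    finally show "(\<lambda>x. eta (- x)) -` A \<inter> space mu \<in> sets mu" .
  qed simp
qed

lemma eta_bdd: "\<exists>M. \<forall>x\<in>B j. norm (eta (- x)) \<le> M"
proof -
  obtain Rf where Rf: "\<And>k. finite (Rf k)" "\<And>k. B (int k) = (\<Union>r\<in>Rf k. {y. av (y - r) \<le> 1})"
    using cosets_fun by blast
  have sub: "B j \<subseteq> B (int (nat j))" by (rule B_mono) simp
  show ?thesis
  proof (intro exI ballI)
    fix x assume "x \<in> B j"
    hence "x \<in> B (int (nat j))" using sub by blast
    then obtain r where r: "r \<in> Rf (nat j)" "av (x - r) \<le> 1" using Rf(2)[of "nat j"] by auto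
    have "norm (eta (- x)) = norm (eta (- r))" using eta_ball[OF r(2)] by simp
    also have "\<dots> \<le> (\<Sum>r\<in>Rf (nat j). norm (eta (- r)))"
      using Rf(1) r(1) by (intro member_le_sum) auto
    finally show "norm (eta (- x)) \<le> (\<Sum>r\<in>Rf (nat j). norm (eta (- r)))" .
  qed
qed

lemma eta_int: "set_integrable mu (B j) (\<lambda>x. eta (- x))"
proof -
  obtain M where M: "\<forall>x\<in>B j. norm (eta (- x)) \<le> M" using eta_bdd by blast
  show ?thesis unfolding set_integrable_def
    by (rule integrableI_bounded_set_indicator[where B = M]) (use M B_meas in auto)
qed

lemma trans_meas[measurable]: "(\<lambda>x. x0 + x) \<in> measurable mu mu"
proof (rule measurable_sigma_sets[OF sets_mu])
  show "av_balls av \<subseteq> Pow UNIV" by simp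
  show "(\<lambda>x. x0 + x) \<in> space mu \<rightarrow> UNIV" by simp
  fix a assume "a \<in> av_balls av"
  then obtain z r where a: "a = {y. av (y - z) \<le> r}" by (auto simp: av_balls_def)
  have "(\<lambda>x. x0 + x) -` a \<inter> space mu = {y. av (y - (z - x0)) \<le> r}" by (auto simp: a algebra_simps)
  thus "(\<lambda>x. x0 + x) -` a \<inter> space mu \<in> sets mu" using ball_sets by simp
qed

lemma distr_trans: "distr mu mu (\<lambda>x. x0 + x) = mu"
proof (rule measure_eqI)
  show "sets (distr mu mu (\<lambda>x. x0 + x)) = sets mu" by simp
  fix A assume A: "A \<in> sets (distr mu mu (\<lambda>x. x0 + x))"
  hence A': "A \<in> sets mu" by simp
  have "(\<lambda>x. x0 + x) -` A \<inter> space mu = (\<lambda>y. - x0 + y) ` A"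
    by (auto simp: image_iff intro!: bexI[of _ "x0 + _"])
  thus "emeasure (distr mu mu (\<lambda>x. x0 + x)) A = emeasure mu A"
    using A' trans_inv[OF A', of "- x0"] by (simp add: emeasure_distr)
qed

lemma integral_trans:
  fixes f :: "'a \<Rightarrow> complex"
  assumes f: "f \<in> borel_measurable mu"
  shows "(\<integral>x. f (x0 + x) \<partial>mu) = integral\<^sup>L mu f"
  using integral_distr[OF trans_meas[of x0] f] distr_trans[of x0] by simp

definition E :: "int \<Rightarrow> complex" where "E j = (LINT x:B j|mu. eta (- x))"

lemma meas_B: "measure mu (B j) = Q powr j"
  using B_meas[of j] powQ_pos by (simp add: measure_def less_imp_le)

lemma E_neg: assumes "j \<le> 0" shows "E j = complex_of_real (Q powr j)"
proof -
  have "E j = (LINT x:B j|mu. (1::complex))"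
    unfolding E_def
  proof (rule set_lebesgue_integral_cong)
    show "\<forall>x. x \<in> B j \<longrightarrow> eta (- x) = 1"
    proof (intro allI impI)
      fix x assume "x \<in> B j"
      hence "av x \<le> Q powr j" by (simp add: B_def)
      also have "\<dots> \<le> Q powr 0" using assms by (subst powQ_le) simp
      finally show "eta (- x) = 1" using eta_1[of "- x"] Q_pos by simp
    qed
  qed simp
  also have "\<dots> = complex_of_real (Q powr j)"
    using B_meas[of j] by (subst set_integral_const) (auto simp: meas_B scaleR_conv_of_real)
  finally show ?thesis .
qed

lemma E_pos: assumes "j \<ge> 1" shows "E j = 0"
proof -
  obtain y where y: "y \<in> int_ring av" "eta (inverse \<pi> * y) \<noteq> 1" using eta_nontriv by blast
  define x0 where "x0 = inverse \<pi> * y"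
  have "av x0 \<le> Q" using y(1) Q_pos by (auto simp: x0_def av_mult av_inverse av_pi int_ring_def intro: mult_left_le)
  also have "Q = Q powr real_of_int 1" using Q_pos by simp
  also have "\<dots> \<le> Q powr real_of_int j" using assms by (subst powQ_le) simp
  finally have x0B: "av x0 \<le> Q powr j" .
  have shift: "x0 + x \<in> B j \<longleftrightarrow> x \<in> B j" for x
  proof
    assume "x0 + x \<in> B j"
    moreover have "av x \<le> max (av (x0 + x)) (av (- x0))" using av_ultra[of "x0 + x" "- x0"] by simp
    ultimately show "x \<in> B j" using x0B by (auto simp: B_def)
  next
    assume "x \<in> B j"
    thus "x0 + x \<in> B j" using av_ultra[of x0 x] x0B by (auto simp: B_def)
  qed
  define f where "f x = indicator (B j) x *\<^sub>R eta (- x)" for x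
  have fm: "f \<in> borel_measurable mu" unfolding f_def by measurable
  have "(\<integral>x. f (x0 + x) \<partial>mu) = (\<integral>x. eta (- x0) * f x \<partial>mu)"
  proof (rule Bochner_Integration.integral_cong)
    fix x
    have "eta (- (x0 + x)) = eta (- x0) * eta (- x)" using eta_add[of "- x0" "- x"] by simp
    thus "f (x0 + x) = eta (- x0) * f x" by (simp add: f_def shift indicator_def)
  qed simp
  also have "\<dots> = eta (- x0) * integral\<^sup>L mu f" by simp
  finally have "integral\<^sup>L mu f = eta (- x0) * integral\<^sup>L mu f" using integral_trans[OF fm, of x0] by simp
  moreover have "eta (- x0) \<noteq> 1" using eta_inv[of x0] y(2) x0_def by auto
  ultimately have "integral\<^sup>L mu f = 0"
    by (metis mult_cancel_right1 mult.commute)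
  moreover have "E j = integral\<^sup>L mu f" by (simp add: E_def set_lebesgue_integral_def f_def[abs_def])
  ultimately show ?thesis by simp
qed

end

lemma seti_cong:
  fixes f g :: "'a \<Rightarrow> complex"
  assumes "set_integrable M A f" "\<And>x. x \<in> A \<Longrightarrow> f x = g x"
  shows "set_integrable M A g"
proof -
  have "(\<lambda>x. indicator A x *\<^sub>R f x) = (\<lambda>x. indicator A x *\<^sub>R g x)"
    using assms(2) by (auto simp: indicator_def fun_eq_iff)
  thus ?thesis using assms(1) by (simp add: set_integrable_def)
qed

lemma setint_cong:
  fixes f g :: "'a \<Rightarrow> complex"
  assumes "\<And>x. x \<in> A \<Longrightarrow> f x = g x"
  shows "(LINT x:A|M. f x) = (LINT x:A|M. g x)"
proof -
  have "(\<lambda>x. indicator A x *\<^sub>R f x) = (\<lambda>x. indicator A x *\<^sub>R g x)"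
    using assms by (auto simp: indicator_def fun_eq_iff)
  thus ?thesis by (simp add: set_lebesgue_integral_def)
qed

context lfe begin

lemma abel:
  fixes G :: "real \<Rightarrow> complex" and c :: complex
  assumes GJ: "\<And>x. x \<in> B J \<Longrightarrow> G (av x) = c" and JK: "J \<le> K"
  shows "set_integrable mu (B K) (\<lambda>x. eta (- x) * G (av x)) \<and>
    (LINT x:B K|mu. eta (- x) * G (av x)) = c * E J + (\<Sum>j\<in>{J<..K}. G (Q powr j) * (E j - E (j - 1)))"
  using JK
proof (induction K rule: int_ge_induct)
  case base
  have i1: "set_integrable mu (B J) (\<lambda>x. eta (- x) * c)" using eta_int by auto
  have "set_integrable mu (B J) (\<lambda>x. eta (- x) * G (av x))"
    by (rule seti_cong[OF i1]) (simp add: GJ)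
  moreover have "(LINT x:B J|mu. eta (- x) * G (av x)) = (LINT x:B J|mu. eta (- x) * c)"
    by (rule setint_cong) (simp add: GJ)
  moreover have "\<dots> = c * E J" by (simp add: E_def mult.commute)
  ultimately show ?case by simp
next
  case (step K)
  define S where "S = B (K + 1) - B K"
  have Ssets: "S \<in> sets mu" unfolding S_def by simp
  have un: "B (K + 1) = B K \<union> S" and dj: "B K \<inter> S = {}"
    using B_mono[of K "K + 1"] by (auto simp: S_def)
  have GS: "G (av x) = G (Q powr (K + 1))" if "x \<in> S" for x
    using shell_av[of x K] that by (simp add: S_def)
  have iS: "set_integrable mu S (\<lambda>x. eta (- x))"
    by (rule set_integrable_subset[OF eta_int Ssets]) (auto simp: S_def)
  have iS2: "set_integrable mu S (\<lambda>x. eta (- x) * G (av x))"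
    by (rule seti_cong[of _ _ "\<lambda>x. eta (- x) * G (Q powr (K + 1))"]) (use iS GS in auto)
  have vS: "(LINT x:S|mu. eta (- x) * G (av x)) = (LINT x:S|mu. eta (- x)) * G (Q powr (K + 1))"
    by (subst setint_cong[of S _ "\<lambda>x. eta (- x) * G (Q powr (K + 1))"]) (use GS in auto)
  have ES: "E (K + 1) = E K + (LINT x:S|mu. eta (- x))"
    unfolding E_def un by (rule set_integral_Un[OF dj eta_int iS])
  have "set_integrable mu (B (K + 1)) (\<lambda>x. eta (- x) * G (av x))"
    unfolding un by (rule set_integrable_Un) (use step.IH iS2 Ssets in auto)
  moreover have "(LINT x:B (K + 1)|mu. eta (- x) * G (av x)) =
      (LINT x:B K|mu. eta (- x) * G (av x)) + (LINT x:S|mu. eta (- x) * G (av x))"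
    unfolding un by (rule set_integral_Un[OF dj]) (use step.IH iS2 in auto)
  moreover have "{J<..K + 1} = insert (K + 1) {J<..K}" using step.hyps by auto
  ultimately show ?case using step.IH vS ES by (simp add: algebra_simps)
qed

end

lemma mat2_nth[simp]:
  "mat2 a b c d $ 1 $ 1 = a" "mat2 a b c d $ 1 $ 2 = b"
  "mat2 a b c d $ 2 $ 1 = c" "mat2 a b c d $ 2 $ 2 = d"
  by (simp_all add: mat2_def)

lemma mat2_eqI:
  fixes M :: "'a::zero^2^2"
  assumes "M $ 1 $ 1 = a" "M $ 1 $ 2 = b" "M $ 2 $ 1 = c" "M $ 2 $ 2 = d"
  shows "M = mat2 a b c d"
  using assms by (simp add: vec_eq_iff forall_2)

lemma mat2_mult:
  fixes a b c d e f g h :: "'a::comm_ring_1"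
  shows "mat2 a b c d ** mat2 e f g h = mat2 (a*e + b*g) (a*f + b*h) (c*e + d*g) (c*f + d*h)"
  by (rule mat2_eqI) (simp_all add: matrix_matrix_mult_def sum_2)

lemma mat2_det: "det (mat2 a b c d :: 'a::comm_ring_1^2^2) = a * d - b * c"
  by (simp add: det_2)

lemma mat2_self: "(M :: 'a::zero^2^2) = mat2 (M$1$1) (M$1$2) (M$2$1) (M$2$2)"
  by (rule mat2_eqI) simp_all

lemma cpowr_inverse:
  assumes "r > 0"
  shows "complex_of_real (inverse r) powr z = complex_of_real r powr (- z)"
proof -
  have "Ln (complex_of_real (inverse r)) = complex_of_real (- ln r)"
    using assms by (simp add: Ln_of_real ln_inverse del: of_real_inverse)
  thus ?thesis using assms by (simp add: powr_def Ln_of_real del: of_real_inverse)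
qed

context lf begin

lemma iwasawa:
  fixes f0 :: "'a^2^2 \<Rightarrow> complex" and \<nu> :: complex
  assumes f0: "\<forall>t x k. t \<noteq> 0 \<longrightarrow> k \<in> SL2_int av \<longrightarrow>
               f0 (amat t ** nmat x ** k) = complex_of_real (av t) powr (\<nu> + 1)"
    and dg: "det g = 1"
  shows "f0 g = complex_of_real (max (av (g$2$1)) (av (g$2$2))) powr (- (\<nu> + 1))"
proof -
  define a b c d where "a = g$1$1" "b = g$1$2" "c = g$2$1" "d = g$2$2"
  have g: "g = mat2 a b c d" unfolding a_b_c_d_def by (rule mat2_self)
  have det: "a * d - b * c = 1" using dg g by (simp add: mat2_det)
  show ?thesis
  proof (cases "av c \<le> av d")
    case True
    have d0: "d \<noteq> 0" using True det av_nonneg[of c] by (cases "c = 0") auto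
    define k where "k = mat2 1 0 (c / d) 1"
    have kS: "k \<in> SL2_int av"
      using True d0 by (auto simp: k_def SL2_int_def mat2_det int_ring_def forall_2 av_divide divide_le_eq_1 av_pos)
    have ea: "(1 + b * c) / d = a" using d0 det by (simp add: field_simps)
    have "amat (1 / d) ** nmat (b * d) ** k = mat2 a b c d"
      using d0 det by (simp add: amat_def nmat_def k_def mat2_mult field_simps)
         (simp add: ea)
    hence "f0 g = complex_of_real (av (1 / d)) powr (\<nu> + 1)"
      using f0 kS d0 g by (metis divide_eq_0_iff one_neq_zero)
    also have "\<dots> = complex_of_real (av d) powr (- (\<nu> + 1))"
    proof -
      have "av (1 / d) = inverse (av d)" by (simp add: av_divide inverse_eq_divide)
      thus ?thesis using cpowr_inverse[OF av_pos[OF d0], of "\<nu> + 1"] by (simp only:)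
    qed
    finally show ?thesis using True by (simp add: a_b_c_d_def max_def)
  next
    case False
    have c0: "c \<noteq> 0" using False av_nonneg[of d] by auto
    define k where "k = mat2 0 (-1) 1 (d / c)"
    have kS: "k \<in> SL2_int av"
      using False c0 by (auto simp: k_def SL2_int_def mat2_det int_ring_def forall_2 av_divide divide_le_eq_1 av_pos)
    have eb: "(a * d - 1) / c = b" "(- 1 + a * d) / c = b" "(a * d + - 1) / c = b" using c0 det by (simp_all add: field_simps)
    have "amat (1 / c) ** nmat (a * c) ** k = mat2 a b c d"
      using c0 det eb by (simp add: amat_def nmat_def k_def mat2_mult field_simps)
    hence "f0 g = complex_of_real (av (1 / c)) powr (\<nu> + 1)"
      using f0 kS c0 g by (metis divide_eq_0_iff one_neq_zero)
    also have "\<dots> = complex_of_real (av c) powr (- (\<nu> + 1))"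
    proof -
      have "av (1 / c) = inverse (av c)" by (simp add: av_divide inverse_eq_divide)
      thus ?thesis using cpowr_inverse[OF av_pos[OF c0], of "\<nu> + 1"] by (simp only:)
    qed
    finally show ?thesis using False by (simp add: a_b_c_d_def max_def)
  qed
qed

lemma wna:
  assumes "t \<noteq> 0"
  shows "wmat ** nmat x ** amat t = mat2 0 (1 / t) (- t) (- x / t)"
  using assms by (simp add: wmat_def nmat_def amat_def mat2_mult field_simps)

lemma ball_image: assumes "c \<noteq> 0" shows "(\<lambda>y. c * y) ` int_ring av = {x. av x \<le> av c}"
proof (intro equalityI subsetI)
  fix x assume "x \<in> (\<lambda>y. c * y) ` int_ring av"
  thus "x \<in> {x. av x \<le> av c}" using av_nonneg[of c]
    by (auto simp: int_ring_def av_mult intro: mult_left_le)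
next
  fix x assume x: "x \<in> {x. av x \<le> av c}"
  have "av (x / c) \<le> 1" using x assms av_pos[OF assms] by (simp add: av_divide)
  moreover have "x = c * (x / c)" using assms by simp
  ultimately show "x \<in> (\<lambda>y. c * y) ` int_ring av" unfolding int_ring_def by (intro image_eqI[of _ _ "x / c"]) auto
qed

lemma Bk_image: "(\<lambda>y. inverse \<pi> ^ k * y) ` int_ring av = B (int k)"
proof -
  have "av (inverse \<pi> ^ k) = Q powr real_of_int (int k)"
    using Q_pos by (simp add: av_power av_inverse av_pi powr_realpow)
  moreover have "inverse \<pi> ^ k \<noteq> 0" using pi_nz by simp
  ultimately show ?thesis by (simp add: ball_image B_def)
qed

end

locale lfw = lfe +
  fixes f0 :: "'a^2^2 \<Rightarrow> complex" and \<nu> :: complex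
  assumes f0: "\<forall>t x k. t \<noteq> 0 \<longrightarrow> k \<in> SL2_int av \<longrightarrow>
               f0 (amat t ** nmat x ** k) = complex_of_real (av t) powr (\<nu> + 1)"
begin

definition Gf :: "real \<Rightarrow> real \<Rightarrow> complex" where
  "Gf a v = complex_of_real (max a (v / a)) powr (- (\<nu> + 1))"

lemma integrand: assumes "t \<noteq> 0" shows "f0 (wmat ** nmat x ** amat t) = Gf (av t) (av x)"
proof -
  have "det (mat2 0 (1 / t) (- t) (- x / t)) = 1" using assms by (simp add: mat2_det)
  hence "f0 (mat2 0 (1 / t) (- t) (- x / t)) = Gf (av t) (av x)"
    using iwasawa[OF f0] by (simp add: Gf_def av_divide)
  thus ?thesis using wna[OF assms] by simp
qed

lemma W_lim: assumes "t \<noteq> 0"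
  shows "whittaker_W av \<pi> mu eta f0 (amat t) = lim (\<lambda>k. LINT x:B (int k)|mu. eta (- x) * Gf (av t) (av x))"
  unfolding whittaker_W_def whittaker_psi_def Bk_image using integrand[OF assms] by simp

definition Wv :: "int \<Rightarrow> complex" where
  "Wv m = Gf (Q powr real_of_int m) (Q powr real_of_int (2 * m)) * complex_of_real (Q powr real_of_int (2 * m))
     + (\<Sum>j::int\<in>{2 * m<..0}. Gf (Q powr real_of_int m) (Q powr real_of_int j) *
          complex_of_real (Q powr real_of_int j - Q powr real_of_int (j - 1)))
     - Gf (Q powr real_of_int m) (Q powr 1)"

lemma W_val: assumes t: "t \<noteq> 0" and m: "av t = Q powr m"
  shows "whittaker_W av \<pi> mu eta f0 (amat t) = (if m > 0 then 0 else Wv m)"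
proof -
  define J where "J = 2 * m"
  define c where "c = Gf (Q powr m) (Q powr J)"
  have QJ: "Q powr J = Q powr m * Q powr m" by (simp add: J_def powr_add[symmetric])
  have GJ: "Gf (av t) (av x) = c" if "x \<in> B J" for x
  proof -
    have "av x \<le> Q powr m * Q powr m" using that QJ by (simp add: B_def)
    hence "av x / Q powr m \<le> Q powr m" using powQ_pos by (simp add: divide_le_eq)
    moreover have "Q powr J / Q powr m = Q powr m" using QJ powQ_pos[of m] by simp
    ultimately show ?thesis by (simp add: c_def Gf_def m max_def)
  qed
  define v where "v = (if m > 0 then 0 else Wv m)"
  have ev: "(LINT x:B (int k)|mu. eta (- x) * Gf (av t) (av x)) = v" if k: "int k \<ge> max J 1" for k
  proof -
    have JK: "J \<le> int k" using k by simp
    have val: "(LINT x:B (int k)|mu. eta (- x) * Gf (av t) (av x)) =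
       c * E J + (\<Sum>j\<in>{J<..int k}. Gf (av t) (Q powr j) * (E j - E (j - 1)))"
      using abel[where G = "Gf (av t)", OF GJ JK] by blast
    show ?thesis
    proof (cases "m > 0")
      case True
      have "E J = 0" using True by (intro E_pos) (simp add: J_def)
      moreover have "(\<Sum>j\<in>{J<..int k}. Gf (av t) (Q powr j) * (E j - E (j - 1))) = 0"
        using True by (intro sum.neutral) (auto simp: J_def E_pos)
      ultimately show ?thesis using val True by (simp add: v_def)
    next
      case False
      have un: "{J<..int k} = {J<..0} \<union> {0<..int k}" using False k by (auto simp: J_def)
      have s2: "(\<Sum>j\<in>{0<..int k}. Gf (av t) (Q powr j) * (E j - E (j - 1))) =
                (\<Sum>j\<in>{1}. Gf (av t) (Q powr j) * (E j - E (j - 1)))"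
        using k by (intro sum.mono_neutral_right) (auto simp: E_pos)
      have s1: "(\<Sum>j\<in>{J<..0}. Gf (av t) (Q powr j) * (E j - E (j - 1))) =
         (\<Sum>j\<in>{J<..0}. Gf (Q powr m) (Q powr j) * complex_of_real (Q powr j - Q powr (j - 1)))"
        by (intro sum.cong) (auto simp: E_neg m)
      have "(\<Sum>j\<in>{J<..int k}. Gf (av t) (Q powr j) * (E j - E (j - 1))) =
         (\<Sum>j\<in>{J<..0}. Gf (av t) (Q powr j) * (E j - E (j - 1))) +
         (\<Sum>j\<in>{0<..int k}. Gf (av t) (Q powr j) * (E j - E (j - 1)))"
        unfolding un by (rule sum.union_disjoint) auto
      also have "\<dots> = (\<Sum>j\<in>{J<..0}. Gf (Q powr m) (Q powr j) * complex_of_real (Q powr j - Q powr (j - 1)))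
          - Gf (Q powr m) (Q powr 1)"
        using s1 s2 by (simp add: E_pos E_neg m Q_pos)
      finally show ?thesis using val False
        by (simp add: v_def Wv_def E_neg J_def c_def mult.commute)
    qed
  qed
  have "(\<lambda>k. LINT x:B (int k)|mu. eta (- x) * Gf (av t) (av x)) \<longlonglongrightarrow> v"
  proof (rule tendsto_eventually)
    show "\<forall>\<^sub>F k in sequentially. (LINT x:B (int k)|mu. eta (- x) * Gf (av t) (av x)) = v"
      unfolding eventually_sequentially
      by (rule exI[of _ "nat (max J 1)"]) (auto intro!: ev)
  qed
  hence "lim (\<lambda>k. LINT x:B (int k)|mu. eta (- x) * Gf (av t) (av x)) = v" by (rule limI)
  thus ?thesis using W_lim[OF t] by (simp add: v_def)
qed

end

lemma expp: "exp (x::complex) ^ k = exp (of_nat k * x)" by (simp add: exp_of_nat_mult)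
lemmas exp_norm = exp_diff[symmetric] exp_add[symmetric] expp

context lfw begin

definition L :: real where "L = ln Q"
lemma L_pos: "L > 0" using Q_gt1 by (simp add: L_def)
lemma QL: "Q powr r = exp (r * L)" using Q_pos by (simp add: powr_def L_def)
lemma cQL: "complex_of_real (Q powr r) = exp (complex_of_real (r * L))"
  unfolding QL exp_of_real by (rule refl)
lemma cQ: "complex_of_real Q = exp (complex_of_real L)"
  using cQL[of 1] by simp
lemma cpQ: "complex_of_real (Q powr r) powr w = exp (w * complex_of_real (r * L))"
proof -
  have "Ln (complex_of_real (Q powr r)) = complex_of_real (r * L)"
    using powQ_pos[of r] Q_pos by (simp add: Ln_of_real L_def ln_powr)
  thus ?thesis using powQ_pos[of r] by (simp add: powr_def)
qed

lemma Gf_le: assumes "v \<le> a * a" "a > 0" shows "Gf a v = complex_of_real a powr (- (\<nu> + 1))"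
proof -
  have "v / a \<le> a" using assms by (simp add: divide_le_eq)
  thus ?thesis by (simp add: Gf_def max_def)
qed

lemma Gf_ge: assumes "a * a \<le> v" "a > 0" shows "Gf a v = complex_of_real (v / a) powr (- (\<nu> + 1))"
proof -
  have "a \<le> v / a" using assms by (simp add: le_divide_eq)
  thus ?thesis by (simp add: Gf_def max_def)
qed

definition VV :: complex where "VV = exp (\<nu> * of_real L)"
definition zz :: "complex \<Rightarrow> complex" where "zz s = exp (- s * of_real L)"
definition HH :: "nat \<Rightarrow> complex" where
  "HH n = VV ^ (2 * n) + (1 - exp (- of_real L)) * (\<Sum>i<2 * n. VV ^ i) - exp (- (\<nu> + 1) * of_real L)"

lemma Wv_series:
  "Wv (- int n) * complex_of_real (Q powr real_of_int (- int n)) powr (s - 1) = (zz s / VV) ^ n * HH n"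
proof -
  define m where "m = - int n"
  have m0: "m \<le> 0" by (simp add: m_def)
  have pm: "Q powr real_of_int m * Q powr real_of_int m = Q powr real_of_int (2 * m)"
    by (simp add: powr_add[symmetric])
  have T1: "Gf (Q powr real_of_int m) (Q powr real_of_int (2 * m)) = exp (- (\<nu> + 1) * of_real (real_of_int m * L))"
    using Gf_le[of "Q powr real_of_int (2 * m)" "Q powr real_of_int m"] pm powQ_pos by (simp add: cpQ)
  have Tj: "Gf (Q powr real_of_int m) (Q powr real_of_int j) = exp (- (\<nu> + 1) * of_real (real_of_int (j - m) * L))"
    if "j > 2 * m" for j
  proof -
    have "Q powr real_of_int (2 * m) \<le> Q powr real_of_int j" using that by (subst powQ_le) simp
    hence "Gf (Q powr real_of_int m) (Q powr real_of_int j) = complex_of_real (Q powr real_of_int j / Q powr real_of_int m) powr (- (\<nu> + 1))"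
      using Gf_ge pm powQ_pos by simp
    also have "Q powr real_of_int j / Q powr real_of_int m = Q powr real_of_int (j - m)" by (simp add: powr_diff)
    finally show ?thesis by (simp add: cpQ)
  qed
  have T3: "Gf (Q powr real_of_int m) (Q powr 1) = exp (- (\<nu> + 1) * of_real (real_of_int (1 - m) * L))"
    using Tj[of 1] m0 by simp
  define M where "M = complex_of_real (Q powr real_of_int m) powr (s - 1)"
  have M: "M = exp ((s - 1) * of_real (real_of_int m * L))" by (simp add: M_def cpQ)
  have e1: "Gf (Q powr real_of_int m) (Q powr real_of_int (2 * m)) * complex_of_real (Q powr real_of_int (2 * m)) * M
      = (zz s / VV) ^ n * VV ^ (2 * n)"
    unfolding T1 M cQL unfolding zz_def VV_def m_def exp_norm
    by (rule arg_cong[where f = exp]) (simp add: algebra_simps)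
  have e3: "Gf (Q powr real_of_int m) (Q powr 1) * M = (zz s / VV) ^ n * exp (- (\<nu> + 1) * of_real L)"
    unfolding T3 M cQL unfolding zz_def VV_def m_def exp_norm
    by (rule arg_cong[where f = exp]) (simp add: algebra_simps)
  have im: "{2 * m<..0} = (\<lambda>i. - int i) ` {..<2 * n}"
  proof (intro equalityI subsetI)
    fix x assume "x \<in> {2 * m<..0}"
    hence "x = - int (nat (- x))" "nat (- x) < 2 * n" by (auto simp: m_def)
    thus "x \<in> (\<lambda>i. - int i) ` {..<2 * n}" by blast
  qed (auto simp: m_def)
  have inj: "inj_on (\<lambda>i. - int i) {..<2 * n}" by (auto simp: inj_on_def)
  have e2: "(\<Sum>j\<in>{2 * m<..0}. Gf (Q powr real_of_int m) (Q powr real_of_int j) *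
          complex_of_real (Q powr real_of_int j - Q powr real_of_int (j - 1))) * M
      = (zz s / VV) ^ n * ((1 - exp (- of_real L)) * (\<Sum>i<2 * n. VV ^ i))"
  proof -
    have "(\<Sum>j\<in>{2 * m<..0}. Gf (Q powr real_of_int m) (Q powr real_of_int j) *
          complex_of_real (Q powr real_of_int j - Q powr real_of_int (j - 1))) * M
       = (\<Sum>j\<in>{2 * m<..0}. Gf (Q powr real_of_int m) (Q powr real_of_int j) *
          complex_of_real (Q powr real_of_int j - Q powr real_of_int (j - 1)) * M)"
      by (simp add: sum_distrib_right)
    also have "\<dots> = (\<Sum>i<2 * n. Gf (Q powr real_of_int m) (Q powr real_of_int (- int i)) *
          complex_of_real (Q powr real_of_int (- int i) - Q powr real_of_int (- int i - 1)) * M)"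
      unfolding im by (subst sum.reindex[OF inj]) simp
    also have "\<dots> = (\<Sum>i<2 * n. (1 - exp (- of_real L)) * ((zz s / VV) ^ n * VV ^ i))"
    proof (intro sum.cong refl)
      fix i assume i: "i \<in> {..<2 * n}"
      have "- int i > 2 * m" using i by (simp add: m_def)
      hence G: "Gf (Q powr real_of_int m) (Q powr real_of_int (- int i)) =
          exp (- (\<nu> + 1) * of_real (real_of_int (- int i - m) * L))" by (rule Tj)
      have D: "complex_of_real (Q powr real_of_int (- int i) - Q powr real_of_int (- int i - 1))
          = exp (of_real (- real i * L)) * (1 - exp (- of_real L))"
      proof -
        have a: "complex_of_real (real_of_int (- int i) * L) = of_real (- real i * L)" by simp
        have b: "complex_of_real (real_of_int (- int i - 1) * L) = of_real (- real i * L) + - of_real L"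
          by (simp add: algebra_simps)
        show ?thesis unfolding of_real_diff cQL a b exp_add by (simp add: algebra_simps)
      qed
      show "Gf (Q powr real_of_int m) (Q powr real_of_int (- int i)) *
          complex_of_real (Q powr real_of_int (- int i) - Q powr real_of_int (- int i - 1)) * M
          = (1 - exp (- of_real L)) * ((zz s / VV) ^ n * VV ^ i)"
      proof -
        have "exp (- (\<nu> + 1) * of_real (real_of_int (- int i - m) * L)) * exp (of_real (- real i * L)) * M
            = (zz s / VV) ^ n * VV ^ i"
          unfolding M unfolding zz_def VV_def m_def exp_norm
          by (rule arg_cong[where f = exp]) (simp add: algebra_simps)
        thus ?thesis unfolding G D by (simp add: algebra_simps)
      qed
    qed
    also have "\<dots> = (zz s / VV) ^ n * ((1 - exp (- of_real L)) * (\<Sum>i<2 * n. VV ^ i))"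
      by (simp add: sum_distrib_left algebra_simps)
    finally show ?thesis .
  qed
  have "Wv m * M = (Gf (Q powr real_of_int m) (Q powr real_of_int (2 * m)) * complex_of_real (Q powr real_of_int (2 * m))) * M
     + (\<Sum>j\<in>{2 * m<..0}. Gf (Q powr real_of_int m) (Q powr real_of_int j) *
          complex_of_real (Q powr real_of_int j - Q powr real_of_int (j - 1))) * M
     - Gf (Q powr real_of_int m) (Q powr 1) * M"
    by (simp add: Wv_def algebra_simps)
  also have "\<dots> = (zz s / VV) ^ n * HH n"
    using e1 e2 e3 by (simp add: HH_def algebra_simps)
  finally show ?thesis by (simp add: M_def m_def)
qed

end

lemma two_n_le: "real (2 * n) \<le> 4 ^ n"
proof (induction n)
  case (Suc n)
  have a: "(1::real) \<le> 4 ^ n" by simp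
  have b: "real (2 * Suc n) = real (2 * n) + 2" by simp
  have c: "(4::real) ^ Suc n = 4 * 4 ^ n" by simp
  show ?case unfolding b c using Suc.IH a by linarith
qed simp

lemma series_main:
  fixes V z Qc :: complex
  defines "H \<equiv> \<lambda>n. V ^ (2 * n) + (1 - 1 / Qc) * (\<Sum>i<2 * n. V ^ i) - 1 / (Qc * V)"
  assumes V0: "V \<noteq> 0" and Q0: "Qc \<noteq> 0"
    and small: "norm (z / V) * (4 * (1 + norm V) ^ 2) < 1"
    and small2: "norm (z * V) < 1"
  shows "(\<lambda>n. (z / V) ^ n * H n) sums ((1 - 1 / (Qc * V)) * (1 + z) / ((1 - z / V) * (1 - z * V)))"
    and "summable (\<lambda>n. norm ((z / V) ^ n * H n))"
proof -
  define y where "y = z / V"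
  define R where "R = 1 + norm V"
  define C where "C = 1 + norm (1 - 1 / Qc) + norm (1 / (Qc * V))"
  define r where "r = norm y * (4 * R ^ 2)"
  have R1: "R \<ge> 1" by (simp add: R_def)
  have R2: "1 \<le> R ^ 2" using R1 by (rule one_le_power)
  have R4: "1 \<le> 4 * R ^ 2" using R2 by linarith
  have r1: "r < 1" using small by (simp add: r_def y_def R_def)
  have r0: "r \<ge> 0" by (simp add: r_def)
  have y1: "norm y < 1"
  proof -
    have "norm y * 1 \<le> norm y * (4 * R ^ 2)" using R4 by (intro mult_left_mono) auto
    hence "norm y \<le> r" unfolding r_def by simp
    thus ?thesis using r1 by simp
  qed
  have Hb: "norm (H n) \<le> C * (4 * R ^ 2) ^ n" for n
  proof -
    have P: "R ^ (2 * n) = (R ^ 2) ^ n" by (simp add: power_mult)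
    have A: "norm (V ^ (2 * n)) \<le> R ^ (2 * n)" unfolding norm_power R_def by (intro power_mono) auto
    have "norm (\<Sum>i<2 * n. V ^ i) \<le> (\<Sum>i<2 * n. R ^ (2 * n))"
    proof (rule order_trans[OF norm_sum sum_mono])
      fix i assume "i \<in> {..<2 * n}"
      have "norm (V ^ i) \<le> R ^ i" unfolding norm_power R_def by (intro power_mono) auto
      also have "\<dots> \<le> R ^ (2 * n)" using R1 \<open>i \<in> {..<2 * n}\<close> by (intro power_increasing) auto
      finally show "norm (V ^ i) \<le> R ^ (2 * n)" .
    qed
    also have "\<dots> = real (2 * n) * R ^ (2 * n)" by simp
    also have "\<dots> \<le> 4 ^ n * R ^ (2 * n)" using two_n_le[of n] by (intro mult_right_mono) auto
    finally have B: "norm (\<Sum>i<2 * n. V ^ i) \<le> (4 * R ^ 2) ^ n" by (simp add: P power_mult_distrib)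
    have "(R ^ 2) ^ n \<le> (4 * R ^ 2) ^ n" by (intro power_mono) auto
    hence A': "norm (V ^ (2 * n)) \<le> (4 * R ^ 2) ^ n" using A P by simp
    have one: "1 \<le> (4 * R ^ 2) ^ (n::nat)" using R4 by (rule one_le_power)
    have "norm (H n) \<le> norm (V ^ (2 * n)) + norm (1 - 1 / Qc) * norm (\<Sum>i<2 * n. V ^ i) + norm (1 / (Qc * V))"
    proof -
      have "norm (H n) \<le> norm (V ^ (2 * n) + (1 - 1 / Qc) * (\<Sum>i<2 * n. V ^ i)) + norm (1 / (Qc * V))"
        unfolding H_def by (rule norm_triangle_ineq4)
      also have "norm (V ^ (2 * n) + (1 - 1 / Qc) * (\<Sum>i<2 * n. V ^ i)) \<le>
          norm (V ^ (2 * n)) + norm ((1 - 1 / Qc) * (\<Sum>i<2 * n. V ^ i))" by (rule norm_triangle_ineq)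
      finally show ?thesis by (simp add: norm_mult)
    qed
    also have "\<dots> \<le> (4 * R ^ 2) ^ n + norm (1 - 1 / Qc) * (4 * R ^ 2) ^ n + norm (1 / (Qc * V)) * (4 * R ^ 2) ^ n"
      using A' B one by (intro add_mono mult_left_mono) (auto intro: mult_right_le_one_le simp: mult_le_cancel_left1)
    also have "\<dots> = C * (4 * R ^ 2) ^ n" by (simp add: C_def algebra_simps)
    finally show ?thesis .
  qed
  have summn: "summable (\<lambda>n. norm (y ^ n * H n))"
  proof (rule summable_comparison_test)
    show "\<exists>N. \<forall>n\<ge>N. norm (norm (y ^ n * H n)) \<le> C * r ^ n"
    proof (intro exI allI impI)
      fix n :: nat
      have "norm (y ^ n * H n) = norm y ^ n * norm (H n)" by (simp add: norm_mult norm_power)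
      also have "\<dots> \<le> norm y ^ n * (C * (4 * R ^ 2) ^ n)" by (intro mult_left_mono Hb) simp
      also have "\<dots> = C * r ^ n" by (simp add: r_def power_mult_distrib)
      finally show "norm (norm (y ^ n * H n)) \<le> C * r ^ n" by simp
    qed
    show "summable (\<lambda>n. C * r ^ n)" using r0 r1 by (intro summable_mult summable_geometric) simp
  qed
  have summ: "summable (\<lambda>n. y ^ n * H n)" using summn by (rule summable_norm_cancel)
  define T where "T = (\<Sum>n. y ^ n * H n)"
  have sT: "(\<lambda>n. y ^ n * H n) sums T" using summ by (simp add: T_def summable_sums)
  define D where "D = V ^ 2 - 1 + (1 - 1 / Qc) * (1 + V)"
  have HS: "H (Suc n) = H n + V ^ (2 * n) * D" for n
    by (simp add: H_def D_def algebra_simps power2_eq_square power_add add_divide_distrib)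
  have s1: "(\<lambda>n. y ^ Suc n * H (Suc n)) sums (T - H 0)"
    using sT by (subst sums_Suc_iff) simp
  have geo: "(\<lambda>n. (z * V) ^ n) sums (1 / (1 - z * V))" using geometric_sums[OF small2] by simp
  have s2: "(\<lambda>n. y * (y ^ n * H n) + y * D * (z * V) ^ n) sums (y * T + y * D * (1 / (1 - z * V)))"
    by (intro sums_add sums_mult geo sT)
  have "(\<lambda>n. y ^ Suc n * H (Suc n)) = (\<lambda>n. y * (y ^ n * H n) + y * D * (z * V) ^ n)"
  proof
    fix n
    have "y * V ^ 2 = z * V" using V0 by (simp add: y_def power2_eq_square)
    hence "y ^ n * V ^ (2 * n) = (z * V) ^ n"
      by (metis power_mult power_mult_distrib mult.commute)
    thus "y ^ Suc n * H (Suc n) = y * (y ^ n * H n) + y * D * (z * V) ^ n"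
      unfolding HS by (simp add: algebra_simps)
  qed
  hence eq: "T - H 0 = y * T + y * D * (1 / (1 - z * V))" using s1 s2 sums_unique2 by metis
  have y1': "1 - y \<noteq> 0" using y1 by auto
  have zv: "1 - z * V \<noteq> 0" using small2 by auto
  have zv2: "V - z \<noteq> 0" using y1' V0 by (auto simp: y_def field_simps)
  have "T = (1 - 1 / (Qc * V)) * (1 + z) / ((1 - z / V) * (1 - z * V))"
  proof -
    have "T * (1 - y) = H 0 + y * D * (1 / (1 - z * V))" using eq by (simp add: algebra_simps)
    hence "T * ((1 - z / V) * (1 - z * V)) = (H 0 + y * D * (1 / (1 - z * V))) * (1 - z * V)"
      by (simp add: y_def mult.assoc)
    also have "\<dots> = (1 - 1 / (Qc * V)) * (1 + z)"
      using V0 Q0 zv by (simp add: H_def D_def y_def field_simps) (simp add: algebra_simps power2_eq_square)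
    finally have "T * ((1 - z / V) * (1 - z * V)) = (1 - 1 / (Qc * V)) * (1 + z)" .
    moreover have "(1 - z / V) * (1 - z * V) \<noteq> 0" using y1' zv by (simp add: y_def)
    ultimately show ?thesis by (simp add: eq_divide_eq)
  qed
  thus "(\<lambda>n. (z / V) ^ n * H n) sums ((1 - 1 / (Qc * V)) * (1 + z) / ((1 - z / V) * (1 - z * V)))"
    using sT by (simp add: y_def)
  show "summable (\<lambda>n. norm ((z / V) ^ n * H n))" using summn by (simp add: y_def)
qed

locale lfz = lfw +
  fixes mux :: "'a measure"
  assumes dtx: "mult_haar av mu mux"
begin

lemma space_mux: "space mux = {x. x \<noteq> 0}" using dtx by (simp add: mult_haar_def)
lemma sets_mux: "sets mux = sets (restrict_space mu {x. x \<noteq> 0})" using dtx by (simp add: mult_haar_def)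
lemma mult_inv: "A \<in> sets mux \<Longrightarrow> x \<noteq> 0 \<Longrightarrow> emeasure mux ((\<lambda>y. x * y) ` A) = emeasure mux A"
  using dtx by (simp add: mult_haar_def)
lemma unit_meas: "emeasure mux (unit_group av) = 1" using dtx by (simp add: mult_haar_def)

definition U :: "int \<Rightarrow> 'a set" where "U m = {t. av t = Q powr real_of_int m}"

lemma U_diff: "U m = B m - B (m - 1)"
proof (intro equalityI subsetI)
  fix x assume "x \<in> U m"
  moreover have "Q powr real_of_int (m - 1) < Q powr real_of_int m" by (subst powQ_less) simp
  ultimately show "x \<in> B m - B (m - 1)" by (auto simp: U_def B_def)
next
  fix x assume x: "x \<in> B m - B (m - 1)"
  thus "x \<in> U m" using shell_av[of x "m - 1"] by (simp add: U_def)
qed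

lemma U_sets: "U m \<in> sets mux"
proof -
  have nz: "{x. x \<noteq> 0} \<inter> space mu \<in> sets mu"
  proof -
    have le0: "av x \<le> 0 \<longleftrightarrow> x = 0" for x
      by (cases "x = 0") (simp_all add: not_le av_pos)
    have "{x. x \<noteq> 0} \<inter> space mu = space mu - {y. av (y - 0) \<le> 0}"
      by (auto simp: le0)
    thus ?thesis using ball_sets[of 0 0] by (metis sets.compl_sets)
  qed
  have "U m \<subseteq> {x. x \<noteq> 0}" using powQ_pos by (auto simp: U_def)
  moreover have "U m \<in> sets mu" unfolding U_diff by simp
  ultimately show ?thesis unfolding sets_mux using sets_restrict_space_iff[OF nz] by blast
qed

lemma U_meas: "emeasure mux (U m) = 1"
proof -
  obtain c where c: "c \<noteq> 0" "av c = Q powr real_of_int m" using exists_av by blast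
  have U0: "U 0 = unit_group av" using Q_pos by (simp add: U_def unit_group_def)
  have "U m = (\<lambda>y. c * y) ` U 0"
  proof (intro equalityI subsetI)
    fix x assume x: "x \<in> U m"
    have "av (x / c) = 1" using x c powQ_pos[of m] by (simp add: U_def av_divide)
    hence "x / c \<in> U 0" using Q_pos by (simp add: U_def)
    moreover have "x = c * (x / c)" using c by simp
    ultimately show "x \<in> (\<lambda>y. c * y) ` U 0" by blast
  next
    fix x assume "x \<in> (\<lambda>y. c * y) ` U 0"
    thus "x \<in> U m" using c Q_pos by (auto simp: U_def av_mult)
  qed
  thus ?thesis using mult_inv[OF U_sets[of 0] c(1)] U0 unit_meas by simp
qed

lemma U_measure: "measure mux (U m) = 1" using U_meas by (simp add: measure_def)

definition hh :: "complex \<Rightarrow> nat \<Rightarrow> complex" where "hh s n = (zz s / VV) ^ n * HH n"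

lemma f_expand:
  assumes t: "t \<noteq> 0"
  shows "whittaker_W av \<pi> mu eta f0 (amat t) * complex_of_real (av t) powr (s - 1)
       = (\<Sum>i. indicator (U (- int i)) t *\<^sub>R hh s i)"
proof -
  obtain m :: int where m: "av t = Q powr m" using av_disc[OF t] by blast
  have ind: "indicator (U (- int i)) t = (if - int i = m then 1 else (0::real))" for i
    using m powQ_eq by (auto simp: U_def indicator_def)
  show ?thesis
  proof (cases "m > 0")
    case True
    have "(\<lambda>i. indicator (U (- int i)) t *\<^sub>R hh s i) = (\<lambda>i. 0)" using True by (auto simp: ind fun_eq_iff)
    thus ?thesis using W_val[OF t m] True by simp
  next
    case False
    define n where "n = nat (- m)"
    have mn: "m = - int n" using False by (simp add: n_def)
    have "(\<lambda>i. indicator (U (- int i)) t *\<^sub>R hh s i) = (\<lambda>i. if i = n then hh s i else 0)"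
      by (auto simp: ind mn fun_eq_iff)
    hence "(\<Sum>i. indicator (U (- int i)) t *\<^sub>R hh s i) = hh s n" using sums_single[of n "hh s"] sums_unique by metis
    moreover have "whittaker_W av \<pi> mu eta f0 (amat t) * complex_of_real (av t) powr (s - 1) = hh s n"
      using W_val[OF t m] False Wv_series[of n s] by (simp add: m mn hh_def)
    ultimately show ?thesis by simp
  qed
qed

lemma conds:
  assumes s: "3 * \<bar>Re \<nu>\<bar> + 4 < Re s"
  shows "norm (zz s / VV) * (4 * (1 + norm VV) ^ 2) < 1" "norm (zz s * VV) < 1" "norm (zz s) < 1"
proof -
  define a where "a = Re \<nu>"
  have nV: "norm VV = exp (a * L)" by (simp add: VV_def a_def)
  have nz: "norm (zz s) = exp (- Re s * L)" by (simp add: zz_def)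
  have L2: "L \<ge> ln 2" using q_ge2 by (simp add: L_def)
  have "1 + norm VV \<le> 2 * exp (\<bar>a\<bar> * L)"
  proof -
    have "exp (a * L) \<le> exp (\<bar>a\<bar> * L)" using L_pos by (simp add: mult_right_mono)
    moreover have "1 \<le> exp (\<bar>a\<bar> * L)" using L_pos by simp
    ultimately show ?thesis using nV by linarith
  qed
  hence "(1 + norm VV) ^ 2 \<le> (2 * exp (\<bar>a\<bar> * L)) ^ 2" by (intro power_mono) auto
  also have "\<dots> = 4 * exp (2 * \<bar>a\<bar> * L)" by (simp add: power2_eq_square exp_add[symmetric] algebra_simps)
  finally have b1: "(1 + norm VV) ^ 2 \<le> 4 * exp (2 * \<bar>a\<bar> * L)" .
  have nzV: "norm (zz s / VV) = exp ((- Re s - a) * L)" using nV nz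
    by (simp add: norm_divide exp_diff[symmetric] algebra_simps)
  have "norm (zz s / VV) * (4 * (1 + norm VV) ^ 2) \<le> exp ((- Re s - a) * L) * (16 * exp (2 * \<bar>a\<bar> * L))"
    unfolding nzV using b1 by (intro mult_left_mono) auto
  also have "\<dots> = 16 * exp ((2 * \<bar>a\<bar> - a - Re s) * L)" by (simp add: exp_add[symmetric] algebra_simps)
  also have "\<dots> < 16 * exp (- 4 * ln 2)"
  proof -
    have "(2 * \<bar>a\<bar> - a - Re s) < -4" using s by (simp add: a_def)
    hence "(2 * \<bar>a\<bar> - a - Re s) * L < -4 * L" using L_pos by (intro mult_strict_right_mono) auto
    also have "\<dots> \<le> - 4 * ln 2" using L2 by simp
    finally show ?thesis by simp
  qed
  also have "exp (- 4 * ln 2) = 1 / (16::real)"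
  proof -
    have "exp (- 4 * ln 2) = (2::real) powr (- 4)" by (simp add: powr_def)
    also have "\<dots> = inverse (2 powr 4)" by (rule powr_minus)
    also have "(2::real) powr 4 = 2 ^ 4" by (rule powr_numeral) simp
    also have "inverse ((2::real) ^ 4) = 1 / 16" by simp
    finally show ?thesis .
  qed
  finally show "norm (zz s / VV) * (4 * (1 + norm VV) ^ 2) < 1" by simp
  have "norm (zz s * VV) = exp ((a - Re s) * L)" using nV nz by (simp add: norm_mult exp_add[symmetric] algebra_simps)
  also have "\<dots> < 1"
  proof -
    have "a - Re s < 0" using s abs_ge_self[of a] by (simp add: a_def)
    hence "(a - Re s) * L < 0" using L_pos by (rule mult_neg_pos)
    thus ?thesis by simp
  qed
  finally show "norm (zz s * VV) < 1" .
  have "norm (zz s) = exp (- Re s * L)" by (rule nz)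
  also have "\<dots> < 1"
  proof -
    have "- Re s < 0" using s abs_ge_zero[of "Re \<nu>"] by linarith
    hence "- Re s * L < 0" using L_pos by (rule mult_neg_pos)
    thus ?thesis by simp
  qed
  finally show "norm (zz s) < 1" .
qed

end

lemma fin_alg:
  fixes a b z X :: complex
  assumes "1 - z \<noteq> 0"
  shows "X / ((1 - a) * (1 - b)) = 1 / ((1 - a) * (1 - z) * (1 - b)) / (1 / (1 - z)) * X"
proof -
  define P where "P = (1 - a) * (1 - b)"
  have e: "(1 - a) * (1 - z) * (1 - b) = P * (1 - z)" by (simp add: P_def mult_ac)
  have "1 / (P * (1 - z)) / (1 / (1 - z)) = (1 - z) / (P * (1 - z))"
    by (simp only: divide_divide_eq_right mult_1 div_by_1 times_divide_eq_left mult.commute[of "1 / _"])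
  also have "\<dots> = 1 / P" using assms by (rule nonzero_divide_mult_cancel_right)
  finally show ?thesis unfolding e by (simp add: P_def)
qed

context lfz begin

lemma qq: "(of_nat q :: complex) powr w = exp (w * complex_of_real L)"
proof -
  have "(of_nat q :: complex) = complex_of_real (Q powr 1)" using Q_pos by simp
  thus ?thesis using cpQ[of 1 w] by (simp only:) simp
qed

lemma main:
  assumes s: "3 * \<bar>Re \<nu>\<bar> + 4 < Re s"
  shows "integrable mux (\<lambda>t. whittaker_W av \<pi> mu eta f0 (amat t) * complex_of_real (av t) powr (s - 1))
         \<and> zeta_I av \<pi> mu mux eta f0 s = L_Ad q \<nu> s / L_triv q s * F_nu q \<nu> s"
proof -
  define Qc where "Qc = complex_of_real Q"
  have Qc0: "Qc \<noteq> 0" using Q_pos by (simp add: Qc_def)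
  have V0: "VV \<noteq> 0" by (simp add: VV_def)
  have cQ': "exp (complex_of_real L) = of_nat q" using cQ by simp
  have c1: "exp (- complex_of_real L) = 1 / Qc" by (simp add: Qc_def cQ' exp_minus inverse_eq_divide)
  have c2: "exp (- (\<nu> + 1) * complex_of_real L) = 1 / (Qc * VV)"
  proof -
    have "exp (- (\<nu> + 1) * complex_of_real L) = inverse (exp (complex_of_real L + \<nu> * complex_of_real L))"
      by (simp add: exp_minus[symmetric] algebra_simps)
    thus ?thesis by (simp add: exp_add Qc_def cQ' VV_def inverse_eq_divide)
  qed
  have hhH: "hh s n = (zz s / VV) ^ n * (VV ^ (2 * n) + (1 - 1 / Qc) * (\<Sum>i<2 * n. VV ^ i) - 1 / (Qc * VV))" for n
    unfolding hh_def HH_def c1 c2 by (rule refl)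
  define T where "T = (1 - 1 / (Qc * VV)) * (1 + zz s) / ((1 - zz s / VV) * (1 - zz s * VV))"
  have cs: "norm (zz s / VV) * (4 * (1 + norm VV) ^ 2) < 1" "norm (zz s * VV) < 1" "norm (zz s) < 1"
    using conds[OF s] by auto
  have hs: "hh s sums T" and hn: "summable (\<lambda>n. norm (hh s n))"
    using series_main[OF V0 Qc0 cs(1) cs(2)] by (simp_all add: hhH[abs_def] T_def)
  define fi where "fi i t = indicator (U (- int i)) t *\<^sub>R hh s i" for i t
  have fin: "emeasure mux (U m) < \<infinity>" for m using U_meas by simp
  have int_i: "integrable mux (fi i)" for i
    unfolding fi_def by (rule integrable_scaleR_left) (use U_sets fin in auto)
  have nfi: "norm (fi i t) = indicator (U (- int i)) t * norm (hh s i)" for i t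
    by (simp add: fi_def indicator_def)
  have sumt: "AE t in mux. summable (\<lambda>i. norm (fi i t))"
  proof (rule AE_I2)
    fix t
    show "summable (\<lambda>i. norm (fi i t))"
    proof (rule summable_comparison_test[OF _ hn])
      show "\<exists>N. \<forall>n\<ge>N. norm (norm (fi n t)) \<le> norm (hh s n)"
        by (intro exI allI impI) (simp add: nfi indicator_def)
    qed
  qed
  have intn: "(\<integral>t. norm (fi i t) \<partial>mux) = norm (hh s i)" for i
    unfolding nfi using U_sets fin by (simp add: U_measure)
  have sumi: "summable (\<lambda>i. \<integral>t. norm (fi i t) \<partial>mux)" unfolding intn by (rule hn)
  have inti: "integral\<^sup>L mux (fi i) = hh s i" for i
    unfolding fi_def using U_sets fin by (simp add: U_measure)
  have I1: "integrable mux (\<lambda>t. \<Sum>i. fi i t)" by (rule integrable_suminf[OF int_i sumt sumi])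
  have I2: "(\<integral>t. (\<Sum>i. fi i t) \<partial>mux) = (\<Sum>i. hh s i)"
    using integral_suminf[OF int_i sumt sumi] by (simp add: inti)
  have feq: "whittaker_W av \<pi> mu eta f0 (amat t) * complex_of_real (av t) powr (s - 1) = (\<Sum>i. fi i t)"
    if "t \<in> space mux" for t
    using f_expand[of t s] that by (simp add: space_mux fi_def)
  have "integrable mux (\<lambda>t. whittaker_W av \<pi> mu eta f0 (amat t) * complex_of_real (av t) powr (s - 1))"
    using I1 by (subst Bochner_Integration.integrable_cong[OF refl feq]) auto
  moreover have "zeta_I av \<pi> mu mux eta f0 s = (\<Sum>i. hh s i)"
    unfolding zeta_I_def using I2 by (subst Bochner_Integration.integral_cong[OF refl feq]) auto
  moreover have "(\<Sum>i. hh s i) = T" using hs by (rule sums_unique[symmetric])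
  moreover have "T = L_Ad q \<nu> s / L_triv q s * F_nu q \<nu> s"
  proof -
    have e1: "(of_nat q :: complex) powr (- (s + \<nu>)) = zz s / VV"
      unfolding qq zz_def VV_def exp_norm by (rule arg_cong[where f = exp]) (simp add: algebra_simps)
    have e2: "(of_nat q :: complex) powr (- s) = zz s" by (simp add: qq zz_def)
    have e3: "(of_nat q :: complex) powr (- (s - \<nu>)) = zz s * VV"
      unfolding qq zz_def VV_def exp_norm by (rule arg_cong[where f = exp]) (simp add: algebra_simps)
    have e4: "(of_nat q :: complex) powr (- \<nu> - 1) = 1 / (Qc * VV)"
    proof -
      have "- \<nu> - 1 = - (\<nu> + 1)" by simp
      thus ?thesis unfolding qq using c2 by (simp only:)
    qed
    have z1: "1 - zz s \<noteq> 0" using cs(3) by auto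
    show ?thesis unfolding L_Ad_def L_triv_def F_nu_def e1 e2 e3 e4 T_def
      using fin_alg[OF z1] by simp
  qed
  ultimately show ?thesis by simp
qed

end

theorem proposition5p1:
  fixes av :: "'a::field \<Rightarrow> real" and \<pi> :: 'a and q :: nat
    and mu mux :: "'a measure" and eta :: "'a \<Rightarrow> complex"
    and f0 :: "'a^2^2 \<Rightarrow> complex" and \<nu> :: complex
  assumes F: "nonarch_local_field av \<pi> q"
    and dx: "add_haar av mu"
    and dtx: "mult_haar av mu mux"
    and eta_hom: "\<forall>x y. eta (x + y) = eta x * eta y"
    and eta_O: "\<forall>x\<in>int_ring av. eta x = 1"
    and eta_nontriv: "\<exists>x\<in>(\<lambda>y. inverse \<pi> * y) ` int_ring av. eta x \<noteq> 1"
    and f0: "\<forall>t x k. t \<noteq> 0 \<longrightarrow> k \<in> SL2_int av \<longrightarrow>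
               f0 (amat t ** nmat x ** k) = complex_of_real (av t) powr (\<nu> + 1)"
  shows "\<exists>\<sigma>::real. \<forall>s. \<sigma> < Re s \<longrightarrow>
           integrable mux (\<lambda>t. whittaker_W av \<pi> mu eta f0 (amat t) * complex_of_real (av t) powr (s - 1))
         \<and> zeta_I av \<pi> mu mux eta f0 s = L_Ad q \<nu> s / L_triv q s * F_nu q \<nu> s"
proof -
  interpret Z: lfz av \<pi> q mu eta f0 \<nu> mux
  proof -
    have "lf av \<pi> q" using F by (simp add: lf_def)
    moreover have "lfm_axioms av mu" using dx by (simp add: lfm_axioms_def)
    moreover have "lfe_axioms av \<pi> eta" using eta_hom eta_O eta_nontriv by (simp add: lfe_axioms_def)
    moreover have "lfw_axioms av f0 \<nu>" using f0 by (simp add: lfw_axioms_def)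
    moreover have "lfz_axioms av mu mux" using dtx by (simp add: lfz_axioms_def)
    ultimately show "lfz av \<pi> q mu eta f0 \<nu> mux"
      by (simp add: lfz_def lfw_def lfe_def lfm_def)
  qed
  show ?thesis by (intro exI[of _ "3 * \<bar>Re \<nu>\<bar> + 4"] allI impI Z.main)
qed

end
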